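(* Let $q$ be a prime power with $q\ge 2s$, and let $1\le t_i\le t_o\le s$. Then there exists a linear $(t_i,t_o,s,q)$-AONT.
   Context: A linear $(t_i,t_o,s,q)$-AONT is given by an invertible $s\times s$ matrix $M$ over $\mathbb{F}_q$ defining the map $\mathbf{x}\mapsto\mathbf{y}=\mathbf{x}M^{-1}$ on row vectors of $\mathbb{F}_q^s$, such that for every set $I$ of $t_i$ input coordinates and every set $J$ of $s-t_o$ output coordinates, the pair $((x_i)_{i\in I},(y_j)_{j\in J})$ takes every value in $\mathbb{F}_q^{t_i+s-t_o}$ equally often as $\mathbf{x}$ ranges over $\mathbb{F}_q^s$. Equivalently, $M$ is invertible and every $t_o\times t_i$ submatrix of $M$ has rank $t_i$. *)

theory Defs
  imports "Jordan_Normal_Form.Matrix"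
begin

text \<open>Matrices over a finite field 'a (so q = CARD('a), a prime power).
  Indices are 0-based: coordinates are {0..<s}. Vectors x in F_q^s are row vectors;
  the row-vector product x M^{-1} is computed as (M^{-1})^T *v x.\<close>

definition mat_inv_of :: "'a :: field mat \<Rightarrow> 'a mat" where
  "mat_inv_of M = (SOME B. inverts_mat M B \<and> inverts_mat B M)"

definition row_times :: "'a :: field vec \<Rightarrow> 'a mat \<Rightarrow> 'a vec" where
  "row_times x A = transpose_mat A *\<^sub>v x"

definition linear_AONT :: "nat \<Rightarrow> nat \<Rightarrow> nat \<Rightarrow> 'a :: {field, finite} mat \<Rightarrow> bool" where
  "linear_AONT ti to s M \<longleftrightarrow>
     M \<in> carrier_mat s s \<and> invertible_mat M \<and>
     (\<forall>I J. I \<subseteq> {0..<s} \<and> card I = ti \<and> J \<subseteq> {0..<s} \<and> card J = s - to \<longrightarrow>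
        (\<exists>c. \<forall>a b :: nat \<Rightarrow> 'a.
           card {x \<in> carrier_vec s. (\<forall>i\<in>I. x $ i = a i) \<and>
                   (\<forall>j\<in>J. row_times x (mat_inv_of M) $ j = b j)} = c))"

end

theory Submission
  imports Defs "Jordan_Normal_Form.Determinant" "HOL-Computational_Algebra.Polynomial" "HOL-Library.FuncSet"
begin

lemma cauchy_indep:
  fixes u w v :: "nat \<Rightarrow> 'a::field"
  assumes finA: "finite A" and finB: "finite B" and cardle: "card B \<le> card A"
    and iu: "inj_on u A" and iw: "inj_on w B"
    and ne: "\<And>a b. a\<in>A \<Longrightarrow> b\<in>B \<Longrightarrow> u a \<noteq> w b"
    and z: "\<And>a. a\<in>A \<Longrightarrow> (\<Sum>b\<in>B. v b / (u a - w b)) = 0"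
    and b0: "b0 \<in> B"
  shows "v b0 = 0"
proof -
  define P where "P = (\<Sum>b\<in>B. smult (v b) (\<Prod>l\<in>B-{b}. [:- w l, 1:]))"
  have deg: "degree P \<le> card B - 1"
    unfolding P_def
  proof (rule degree_sum_le[OF finB])
    fix b assume b: "b \<in> B"
    have "degree (smult (v b) (\<Prod>l\<in>B-{b}. [:- w l, 1:])) \<le> degree (\<Prod>l\<in>B-{b}. [:- w l, 1:])"
      by (rule degree_smult_le)
    also have "\<dots> \<le> sum (degree \<circ> (\<lambda>l. [:- w l, 1:])) (B-{b})"
      by (rule degree_prod_sum_le) (use finB in auto)
    also have "\<dots> = card (B - {b})" by simp
    also have "\<dots> = card B - 1" using b finB by simp
    finally show "degree (smult (v b) (\<Prod>l\<in>B-{b}. [:- w l, 1:])) \<le> card B - 1" .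
  qed
  have roots: "poly P (u a) = 0" if a: "a \<in> A" for a
  proof -
    have "poly P (u a) = (\<Sum>b\<in>B. v b * (\<Prod>l\<in>B-{b}. (u a - w l)))"
      unfolding P_def by (simp add: poly_sum poly_prod)
    also have "\<dots> = (\<Sum>b\<in>B. (\<Prod>l\<in>B. (u a - w l)) * (v b / (u a - w b)))"
    proof (rule sum.cong[OF refl])
      fix b assume b: "b \<in> B"
      have nz: "u a - w b \<noteq> 0" using ne[OF a b] by simp
      have Q: "(\<Prod>l\<in>B. (u a - w l)) = (u a - w b) * (\<Prod>l\<in>B-{b}. (u a - w l))"
        using prod.remove[OF finB b] .
      show "v b * (\<Prod>l\<in>B-{b}. (u a - w l)) = (\<Prod>l\<in>B. (u a - w l)) * (v b / (u a - w b))"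
        unfolding Q using nz by (simp add: field_simps)
    qed
    also have "\<dots> = (\<Prod>l\<in>B. (u a - w l)) * (\<Sum>b\<in>B. v b / (u a - w b))"
      by (simp add: sum_distrib_left)
    also have "\<dots> = 0" using z[OF a] by simp
    finally show ?thesis .
  qed
  have P0: "P = 0"
  proof (rule ccontr)
    assume "P \<noteq> 0"
    then have fin: "finite {x. poly P x = 0}" by (rule poly_roots_finite)
    have "u ` A \<subseteq> {x. poly P x = 0}" using roots by auto
    then have "card (u ` A) \<le> card {x. poly P x = 0}" by (rule card_mono[OF fin])
    also have "\<dots> \<le> degree P" by (rule card_poly_roots_bound[OF \<open>P \<noteq> 0\<close>])
    finally have "card A \<le> card B - 1" using card_image[OF iu] deg by simp
    moreover have "card B \<ge> 1" using b0 finB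
      by (metis One_nat_def Suc_leI card_gt_0_iff empty_iff)
    ultimately show False using cardle by simp
  qed
  have "poly P (w b0) = (\<Sum>b\<in>B. v b * (\<Prod>l\<in>B-{b}. (w b0 - w l)))"
    unfolding P_def by (simp add: poly_sum poly_prod)
  also have "\<dots> = v b0 * (\<Prod>l\<in>B-{b0}. (w b0 - w l)) + (\<Sum>b\<in>B-{b0}. v b * (\<Prod>l\<in>B-{b}. (w b0 - w l)))"
    using sum.remove[OF finB b0] .
  also have "(\<Sum>b\<in>B-{b0}. v b * (\<Prod>l\<in>B-{b}. (w b0 - w l))) = 0"
  proof (rule sum.neutral, rule ballI)
    fix b assume b: "b \<in> B - {b0}"
    have "(\<Prod>l\<in>B-{b}. (w b0 - w l)) = 0"
      using b b0 finB by (intro prod_zero) auto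
    then show "v b * (\<Prod>l\<in>B-{b}. (w b0 - w l)) = 0" by simp
  qed
  finally have eq: "v b0 * (\<Prod>l\<in>B-{b0}. (w b0 - w l)) = 0" using P0 by simp
  have "(\<Prod>l\<in>B-{b0}. (w b0 - w l)) \<noteq> 0"
  proof
    assume "(\<Prod>l\<in>B-{b0}. (w b0 - w l)) = 0"
    then obtain l where "l \<in> B - {b0}" "w b0 - w l = 0" using finB by auto
    then show False using iw b0 by (auto dest: inj_onD)
  qed
  then show ?thesis using eq by simp
qed


theorem mainTheorem10:
  fixes s ti to :: nat
  assumes "card (UNIV :: 'a set) \<ge> 2 * s"
    and "1 \<le> ti" and "ti \<le> to" and "to \<le> s"
  shows "\<exists>M :: ('a :: {field, finite}) mat. linear_AONT ti to s M"
proof -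
  obtain f :: "nat \<Rightarrow> 'a" where f: "inj_on f {0..<2*s}"
    using card_le_inj[of "{0..<2*s}" "UNIV :: 'a set"] assms(1) by auto
  have fne: "f r \<noteq> f (s + c)" if "r < s" "c < s" for r c
    using inj_onD[OF f, of r "s + c"] that by auto
  define m where "m r c = 1 / (f r - f (s + c))" for r c
  define M where "M = mat s s (\<lambda>(r,c). m r c)"
  have Mc: "M \<in> carrier_mat s s" unfolding M_def by simp
  have kern: "v = 0\<^sub>v s" if v: "v \<in> carrier_vec s" and Mv: "M *\<^sub>v v = 0\<^sub>v s" for v
  proof (rule eq_vecI)
    show "dim_vec v = dim_vec (0\<^sub>v s)" using v by simp
    fix c assume "c < dim_vec (0\<^sub>v s)"
    then have c: "c \<in> {0..<s}" by simp
    have "v $ c = 0"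
    proof (rule cauchy_indep[where A="{0..<s}" and B="{0..<s}" and u=f and w="\<lambda>c. f (s + c)"
          and v="\<lambda>c. v $ c", OF _ _ _ _ _ _ _ c])
      show "inj_on f {0..<s}" using f by (rule inj_on_subset) auto
      show "inj_on (\<lambda>c. f (s + c)) {0..<s}"
      proof (rule inj_onI)
        fix x y assume "x \<in> {0..<s}" "y \<in> {0..<s}" "f (s + x) = f (s + y)"
        then show "x = y" using inj_onD[OF f, of "s + x" "s + y"] by auto
      qed
      show "f a \<noteq> f (s + b)" if "a \<in> {0..<s}" "b \<in> {0..<s}" for a b using fne that by auto
      fix r assume r: "r \<in> {0..<s}"
      have "(M *\<^sub>v v) $ r = 0" using Mv r by simp
      moreover have "(M *\<^sub>v v) $ r = (\<Sum>c\<in>{0..<s}. m r c * v $ c)"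
        using r v Mc by (simp add: scalar_prod_def M_def)
      ultimately show "(\<Sum>c\<in>{0..<s}. v $ c / (f r - f (s + c))) = 0"
        by (simp add: m_def)
    qed auto
    then show "v $ c = 0\<^sub>v s $ c" using c by simp
  qed
  have "det M \<noteq> 0"
    using det_0_iff_vec_prod_zero_field[OF Mc] kern by auto
  from det_non_zero_imp_unit[OF Mc this, of "()"]
  obtain B where B: "B \<in> carrier_mat s s" "M * B = 1\<^sub>m s" "B * M = 1\<^sub>m s"
    by (auto simp: Units_def ring_mat_def)
  have invM: "invertible_mat M"
    unfolding invertible_mat_def inverts_mat_def using B Mc by (auto intro!: exI[of _ B])
  define N where "N = mat_inv_of M"
  have "inverts_mat M N \<and> inverts_mat N M"
    unfolding N_def mat_inv_of_def
    by (rule someI_ex) (use invM in \<open>auto simp: invertible_mat_def\<close>)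
  then have MN: "M * N = 1\<^sub>m s" and NM0: "N * M = 1\<^sub>m (dim_row N)"
    using Mc by (auto simp: inverts_mat_def)
  have "dim_col N = s" using arg_cong[OF MN, of dim_col] by simp
  moreover have "dim_row N = s" using arg_cong[OF NM0, of dim_col] Mc by simp
  ultimately have Nc: "N \<in> carrier_mat s s" by auto
  have NMT: "transpose_mat N *\<^sub>v (transpose_mat M *\<^sub>v y) = y" if y: "y \<in> carrier_vec s" for y
  proof -
    have "transpose_mat N *\<^sub>v (transpose_mat M *\<^sub>v y) = (transpose_mat N * transpose_mat M) *\<^sub>v y"
      by (rule sym, rule assoc_mult_mat_vec) (use Nc Mc y in auto)
    also have "transpose_mat N * transpose_mat M = transpose_mat (M * N)"
      using transpose_mult[OF Mc Nc] by simp
    finally show ?thesis using MN y by simp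
  qed
  have cond: "\<exists>c. \<forall>a b :: nat \<Rightarrow> 'a.
           card {x \<in> carrier_vec s. (\<forall>i\<in>I. x $ i = a i) \<and>
                   (\<forall>j\<in>J. row_times x N $ j = b j)} = c"
    if I: "I \<subseteq> {0..<s}" "card I = ti" and J: "J \<subseteq> {0..<s}" "card J = s - to" for I J
  proof -
    define X where "X a b = {x \<in> carrier_vec s. (\<forall>i\<in>I. x $ i = a i) \<and>
                   (\<forall>j\<in>J. row_times x N $ j = b j)}" for a b
    have finI: "finite I" using I(1) by (rule finite_subset) simp
    have finJ: "finite J" using J(1) by (rule finite_subset) simp
    have "card ({0..<s} - J) = to" using J assms(4) by (simp add: card_Diff_subset finJ)
    then obtain R where R: "R \<subseteq> {0..<s} - J" "card R = ti"
      using obtain_subset_with_card_n[of ti "{0..<s} - J"] assms(3) by auto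
    have Rs: "{0..<s} \<inter> R = R" using R(1) by blast
    have Js: "{0..<s} \<inter> J = J" using J(1) by blast
    have finR: "finite R" using R(1) by (rule finite_subset) simp
    define D where "D = PiE R (\<lambda>_. UNIV :: 'a set)"
    define E where "E = PiE I (\<lambda>_. UNIV :: 'a set)"
    define \<phi> where "\<phi> g = restrict (\<lambda>i. \<Sum>r\<in>R. g r * m r i) I" for g
    have injphi: "inj_on \<phi> D"
    proof (rule inj_onI)
      fix g1 g2 assume g1: "g1 \<in> D" and g2: "g2 \<in> D" and eq: "\<phi> g1 = \<phi> g2"
      show "g1 = g2"
      proof (rule PiE_ext[OF g1[unfolded D_def] g2[unfolded D_def]])
        fix r0 assume r0: "r0 \<in> R"
        have "g1 r0 - g2 r0 = 0"
        proof (rule cauchy_indep[where A=I and B=R and u="\<lambda>i. f (s + i)" and w=f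
              and v="\<lambda>r. g1 r - g2 r", OF finI finR _ _ _ _ _ r0])
          show "card R \<le> card I" using R I by simp
          show "inj_on (\<lambda>i. f (s + i)) I"
          proof (rule inj_onI)
            fix x y assume "x \<in> I" "y \<in> I" "f (s + x) = f (s + y)"
            then show "x = y" using inj_onD[OF f, of "s + x" "s + y"] I by (auto simp: subset_iff)
          qed
          show "inj_on f R" by (rule inj_on_subset[OF f]) (use R in \<open>auto simp: subset_iff\<close>)
          show "f (s + a) \<noteq> f b" if "a \<in> I" "b \<in> R" for a b
            using fne[of b a] that I R by (auto simp: subset_iff)
          fix i assume i: "i \<in> I"
          have e: "(\<Sum>r\<in>R. g1 r * m r i) = (\<Sum>r\<in>R. g2 r * m r i)"
            using fun_cong[OF eq, of i] i by (simp add: \<phi>_def)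
          have "(\<Sum>r\<in>R. (g1 r - g2 r) / (f (s + i) - f r)) =
                (\<Sum>r\<in>R. g2 r * m r i) - (\<Sum>r\<in>R. g1 r * m r i)"
            unfolding sum_subtractf[symmetric]
          proof (rule sum.cong[OF refl])
            fix r assume r: "r \<in> R"
            have "f r - f (s + i) \<noteq> 0" using fne[of r i] r i I R by (auto simp: subset_iff)
            have gen: "\<And>x y (d::'a). (x - y) / (- d) = y * (1 / d) - x * (1 / d)"
              by (simp add: diff_divide_distrib)
            have d: "f (s + i) - f r = - (f r - f (s + i))" by simp
            show "(g1 r - g2 r) / (f (s + i) - f r) = g2 r * m r i - g1 r * m r i"
              unfolding d m_def by (rule gen)
          qed
          then show "(\<Sum>r\<in>R. (g1 r - g2 r) / (f (s + i) - f r)) = 0" using e by simp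
        qed
        then show "g1 r0 = g2 r0" by simp
      qed
    qed
    have sub: "\<phi> ` D \<subseteq> E" unfolding \<phi>_def E_def by auto
    have finE: "finite E" unfolding E_def by (rule finite_PiE[OF finI]) auto
    have "card D = card E" unfolding D_def E_def
      using card_PiE[OF finR, of "\<lambda>_. UNIV :: 'a set"] card_PiE[OF finI, of "\<lambda>_. UNIV :: 'a set"] R I
      by simp
    then have surj: "\<phi> ` D = E"
      using card_subset_eq[OF finE sub] card_image[OF injphi] by simp
    have x0: "\<exists>x0\<in>X a b. True" for a b
    proof -
      define d where "d = restrict (\<lambda>i. a i - (\<Sum>j\<in>J. m j i * b j)) I"
      have "d \<in> E" unfolding d_def E_def by auto
      then have "d \<in> \<phi> ` D" using surj by simp
      then obtain g where g: "g \<in> D" "\<phi> g = d" by (metis imageE)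
      have gi: "(\<Sum>r\<in>R. g r * m r i) = a i - (\<Sum>j\<in>J. m j i * b j)" if "i \<in> I" for i
        using fun_cong[OF g(2), of i] that by (simp add: \<phi>_def d_def)
      define y0 where "y0 = vec s (\<lambda>r. if r \<in> J then b r else if r \<in> R then g r else 0)"
      have y0c: "y0 \<in> carrier_vec s" unfolding y0_def by simp
      define x0 where "x0 = transpose_mat M *\<^sub>v y0"
      have "dim_vec x0 = s" unfolding x0_def using Mc by simp
      then have x0c: "x0 \<in> carrier_vec s" by (rule carrier_vecI)
      have "x0 \<in> X a b"
        unfolding X_def
      proof (intro CollectI conjI ballI x0c)
        fix i assume i: "i \<in> I"
        have iss: "i < s" using subsetD[OF I(1) i] by simp
        have "x0 $ i = (\<Sum>r\<in>{0..<s}. m r i * y0 $ r)"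
          unfolding x0_def using iss Mc y0c by (simp add: scalar_prod_def M_def)
        also have "\<dots> = (\<Sum>r\<in>{0..<s}. (if r \<in> J then m r i * b r else 0))
                       + (\<Sum>r\<in>{0..<s}. (if r \<in> R then g r * m r i else 0))"
          unfolding sum.distrib[symmetric]
          by (rule sum.cong[OF refl]) (use R in \<open>auto simp: y0_def\<close>)
        also have "\<dots> = (\<Sum>r\<in>J. m r i * b r) + (\<Sum>r\<in>R. g r * m r i)"
          using sum.inter_restrict[of "{0..<s}" "\<lambda>r. m r i * b r" J]
                sum.inter_restrict[of "{0..<s}" "\<lambda>r. g r * m r i" R] Js Rs
          by simp
        also have "\<dots> = a i" using gi[OF i] by simp
        finally show "x0 $ i = a i" .
      next
        fix j assume j: "j \<in> J"
        have "row_times x0 N = y0"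
          unfolding row_times_def x0_def using NMT[OF y0c] .
        moreover have "j < s" using subsetD[OF J(1) j] by simp
        ultimately show "row_times x0 N $ j = b j" using j by (simp add: y0_def)
      qed
      then show ?thesis by blast
    qed
    have "card (X a b) = card (X (\<lambda>_. 0) (\<lambda>_. 0))" for a b
    proof -
      obtain x0 where x0: "x0 \<in> X a b" using x0 by blast
      have x0c: "x0 \<in> carrier_vec s" using x0 by (simp add: X_def)
      have lin_add: "row_times (z + x0) N = row_times z N + row_times x0 N"
        if "z \<in> carrier_vec s" for z
        unfolding row_times_def using Nc that x0c by (simp add: mult_add_distrib_mat_vec[of _ s s])
      have lin_sub: "row_times (x - x0) N = row_times x N - row_times x0 N"
        if "x \<in> carrier_vec s" for x
        unfolding row_times_def using Nc that x0c by (simp add: mult_minus_distrib_mat_vec[of _ s s])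
      have Is: "i < s" if "i \<in> I" for i using subsetD[OF I(1) that] by simp
      have Jl: "j < s" if "j \<in> J" for j using subsetD[OF J(1) that] by simp
      have dimr: "dim_vec (row_times z N) = s" for z
        unfolding row_times_def using Nc by simp
      have img: "X a b = (\<lambda>z. z + x0) ` X (\<lambda>_. 0) (\<lambda>_. 0)"
      proof (intro equalityI subsetI)
        fix x assume x: "x \<in> X a b"
        have xc: "x \<in> carrier_vec s" using x by (simp add: X_def)
        have "x - x0 \<in> X (\<lambda>_. 0) (\<lambda>_. 0)"
          unfolding X_def
        proof (intro CollectI conjI ballI)
          show "x - x0 \<in> carrier_vec s" using xc x0c by simp
          fix i assume i: "i \<in> I"
          have "x $ i = a i" "x0 $ i = a i" using x x0 i by (auto simp: X_def)
          then show "(x - x0) $ i = 0" using Is[OF i] x0c by simp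
        next
          fix j assume j: "j \<in> J"
          have "row_times x N $ j = b j" "row_times x0 N $ j = b j" using x x0 j by (auto simp: X_def)
          then show "row_times (x - x0) N $ j = 0" unfolding lin_sub[OF xc]
            using Jl[OF j] dimr[of x0] by simp
        qed
        moreover have "x = (x - x0) + x0" using xc x0c by auto
        ultimately show "x \<in> (\<lambda>z. z + x0) ` X (\<lambda>_. 0) (\<lambda>_. 0)" by blast
      next
        fix x assume "x \<in> (\<lambda>z. z + x0) ` X (\<lambda>_. 0) (\<lambda>_. 0)"
        then obtain z where z: "z \<in> X (\<lambda>_. 0) (\<lambda>_. 0)" and xz: "x = z + x0" by blast
        have zc: "z \<in> carrier_vec s" using z by (simp add: X_def)
        show "x \<in> X a b"
          unfolding xz X_def
        proof (intro CollectI conjI ballI)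
          show "z + x0 \<in> carrier_vec s" using zc x0c by simp
          fix i assume i: "i \<in> I"
          have "z $ i = 0" "x0 $ i = a i" using z x0 i by (auto simp: X_def)
          then show "(z + x0) $ i = a i" using Is[OF i] x0c by simp
        next
          fix j assume j: "j \<in> J"
          have "row_times z N $ j = 0" "row_times x0 N $ j = b j" using z x0 j by (auto simp: X_def)
          then show "row_times (z + x0) N $ j = b j" unfolding lin_add[OF zc]
            using Jl[OF j] dimr[of x0] by simp
        qed
      qed
      have "inj_on (\<lambda>z. z + x0) (X (\<lambda>_. 0) (\<lambda>_. 0))"
      proof (rule inj_onI)
        fix z1 z2 assume "z1 \<in> X (\<lambda>_. 0) (\<lambda>_. 0)" "z2 \<in> X (\<lambda>_. 0) (\<lambda>_. 0)" "z1 + x0 = z2 + x0"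
        then have zc: "z1 \<in> carrier_vec s" "z2 \<in> carrier_vec s" and eq: "z1 + x0 = z2 + x0"
          by (auto simp: X_def)
        show "z1 = z2"
        proof (rule eq_vecI)
          show "dim_vec z1 = dim_vec z2" using zc by simp
          fix i assume i: "i < dim_vec z2"
          from eq have "(z1 + x0) $ i = (z2 + x0) $ i" by simp
          then show "z1 $ i = z2 $ i" using i zc x0c by simp
        qed
      qed
      then show ?thesis unfolding img by (rule card_image)
    qed
    then show ?thesis unfolding X_def by blast
  qed
  show ?thesis
    unfolding linear_AONT_def
    using Mc invM cond by (auto simp: N_def)
qed

end
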